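(* The following problem (the compromise min-max regret minimum selection problem) can be solved in polynomial time: given $n\ge1$, $p\in\{0,\dots,n\}$ and $\hat c\in\mathbb{Q}^n_{\ge0}$, with $\mathcal{X}=\{x\in\{0,1\}^n:\sum_i x_i=p\}$ and $\mathcal{U}(\lambda)=\prod_{i=1}^n[(1-\lambda)\hat c_i,(1+\lambda)\hat c_i]$, find $x\in\mathcal{X}$ minimizing \[ val(x)=\int_0^1\max_{c\in\mathcal{U}(\lambda)}\Big(c^tx-\min_{y\in\mathcal{X}}c^ty\Big)\,d\lambda . \]
   Context: The paper uses the uncertainty-size range $\Lambda=[0,1]$ and weight function $w\equiv1$ for the min-max regret compromise problem. *)

theory Defs
  imports "HOL-Analysis.Analysis" "HOL-Library.Log_Nat"
begin

text \<open>Vectors in R^n are modelled as functions nat => real, only indices i < n matter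
  (we require entries with index >= n to be 0 for elements of the sets below).\<close>

definition dotp :: "nat \<Rightarrow> (nat \<Rightarrow> real) \<Rightarrow> (nat \<Rightarrow> real) \<Rightarrow> real" where
  "dotp n c x = (\<Sum>i<n. c i * x i)"

definition feas :: "nat \<Rightarrow> nat \<Rightarrow> (nat \<Rightarrow> real) set" where
  "feas n p = {x. (\<forall>i<n. x i = 0 \<or> x i = 1) \<and> (\<forall>i\<ge>n. x i = 0) \<and> (\<Sum>i<n. x i) = real p}"

definition unc :: "nat \<Rightarrow> (nat \<Rightarrow> real) \<Rightarrow> real \<Rightarrow> (nat \<Rightarrow> real) set" where
  "unc n ch lam = {c. (\<forall>i<n. (1 - lam) * ch i \<le> c i \<and> c i \<le> (1 + lam) * ch i) \<and> (\<forall>i\<ge>n. c i = 0)}"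

text \<open>Max regret of x under U(lambda): max over c in U(lambda) of (c^t x - min over y in X of c^t y).
  The maximum is attained (compact set, continuous function), so it equals the supremum.\<close>
definition max_regret :: "nat \<Rightarrow> nat \<Rightarrow> (nat \<Rightarrow> real) \<Rightarrow> real \<Rightarrow> (nat \<Rightarrow> real) \<Rightarrow> real" where
  "max_regret n p ch lam x =
     (SUP c\<in>unc n ch lam. dotp n c x - Min ((\<lambda>y. dotp n c y) ` feas n p))"

definition compromise_val :: "nat \<Rightarrow> nat \<Rightarrow> (nat \<Rightarrow> real) \<Rightarrow> (nat \<Rightarrow> real) \<Rightarrow> real" where
  "compromise_val n p ch x = integral {0..1} (\<lambda>lam. max_regret n p ch lam x)"

section \<open>A machine model: log-cost RAM (integer registers, indirect addressing)\<close>

definition bitlen :: "int \<Rightarrow> nat" where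
  "bitlen v = floorlog 2 (nat \<bar>v\<bar>) + 1"

type_synonym mem = "nat \<Rightarrow> int"

datatype aexp = N int | Ld aexp | Plus aexp aexp | Minus aexp aexp | Times aexp aexp
  | Div aexp aexp | Mod aexp aexp

text \<open>Evaluation returns the value together with its log-cost (sum of bit lengths of
  all operands, addresses and loaded contents).\<close>
fun aval :: "aexp \<Rightarrow> mem \<Rightarrow> int \<times> nat" where
  "aval (N k) s = (k, bitlen k)"
| "aval (Ld a) s = (case aval a s of (v, c) \<Rightarrow> (s (nat v), c + bitlen v + bitlen (s (nat v))))"
| "aval (Plus a b) s = (case aval a s of (v, c) \<Rightarrow> case aval b s of (w, d) \<Rightarrow>
      (v + w, c + d + bitlen v + bitlen w))"
| "aval (Minus a b) s = (case aval a s of (v, c) \<Rightarrow> case aval b s of (w, d) \<Rightarrow>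
      (v - w, c + d + bitlen v + bitlen w))"
| "aval (Times a b) s = (case aval a s of (v, c) \<Rightarrow> case aval b s of (w, d) \<Rightarrow>
      (v * w, c + d + bitlen v + bitlen w))"
| "aval (Div a b) s = (case aval a s of (v, c) \<Rightarrow> case aval b s of (w, d) \<Rightarrow>
      (v div w, c + d + bitlen v + bitlen w))"
| "aval (Mod a b) s = (case aval a s of (v, c) \<Rightarrow> case aval b s of (w, d) \<Rightarrow>
      (v mod w, c + d + bitlen v + bitlen w))"

datatype bexp = Less aexp aexp | Eq aexp aexp | Neg bexp | Conj bexp bexp

fun bval :: "bexp \<Rightarrow> mem \<Rightarrow> bool \<times> nat" where
  "bval (Less a b) s = (case aval a s of (v, c) \<Rightarrow> case aval b s of (w, d) \<Rightarrow>
      (v < w, c + d + bitlen v + bitlen w))"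
| "bval (Eq a b) s = (case aval a s of (v, c) \<Rightarrow> case aval b s of (w, d) \<Rightarrow>
      (v = w, c + d + bitlen v + bitlen w))"
| "bval (Neg b) s = (case bval b s of (v, c) \<Rightarrow> (\<not> v, c + 1))"
| "bval (Conj a b) s = (case bval a s of (v, c) \<Rightarrow> case bval b s of (w, d) \<Rightarrow>
      (v \<and> w, c + d + 1))"

datatype com = SKIP | Store aexp aexp | Seq com com | If bexp com com | While bexp com

text \<open>Big-step semantics with cost: big_step prog s t s' means prog started in memory s
  terminates in memory s' using t time units.\<close>
inductive big_step :: "com \<Rightarrow> mem \<Rightarrow> nat \<Rightarrow> mem \<Rightarrow> bool" where
  Skip: "big_step SKIP s 1 s"
| Store: "aval a s = (i, c1) \<Longrightarrow> aval b s = (v, c2) \<Longrightarrow>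
          big_step (Store a b) s (c1 + c2 + 1) (s(nat i := v))"
| Seq: "big_step c1 s t1 s2 \<Longrightarrow> big_step c2 s2 t2 s3 \<Longrightarrow> big_step (Seq c1 c2) s (t1 + t2 + 1) s3"
| IfT: "bval b s = (True, c) \<Longrightarrow> big_step c1 s t s' \<Longrightarrow> big_step (If b c1 c2) s (c + t + 1) s'"
| IfF: "bval b s = (False, c) \<Longrightarrow> big_step c2 s t s' \<Longrightarrow> big_step (If b c1 c2) s (c + t + 1) s'"
| WhileF: "bval b s = (False, c) \<Longrightarrow> big_step (While b body) s (c + 1) s"
| WhileT: "bval b s = (True, c) \<Longrightarrow> big_step body s t1 s2 \<Longrightarrow> big_step (While b body) s2 t2 s3 \<Longrightarrow>
           big_step (While b body) s (c + t1 + t2 + 1) s3"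

text \<open>Register 0 holds n, register 1 holds p, registers 2+2i and 3+2i hold numerator and
  (positive) denominator of the reduced fraction ch_i, for i < n; all other registers are 0.\<close>
definition enc :: "nat \<Rightarrow> nat \<Rightarrow> (nat \<Rightarrow> rat) \<Rightarrow> mem" where
  "enc n p ch = (\<lambda>a. if a = 0 then int n else if a = 1 then int p
      else if a < 2 + 2 * n then
        (if even (a - 2) then fst (quotient_of (ch ((a - 2) div 2)))
         else snd (quotient_of (ch ((a - 2) div 2))))
      else 0)"

definition input_size :: "nat \<Rightarrow> nat \<Rightarrow> (nat \<Rightarrow> rat) \<Rightarrow> nat" where
  "input_size n p ch = (\<Sum>a<2 + 2 * n. bitlen (enc n p ch a))"

definition decode_out :: "nat \<Rightarrow> mem \<Rightarrow> (nat \<Rightarrow> real)" where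
  "decode_out n s = (\<lambda>i. if i < n then real_of_int (s i) else 0)"

end

theory Submission
  imports Defs
begin


definition fr :: "nat \<Rightarrow> (nat \<Rightarrow> real) \<Rightarrow> real \<Rightarrow> (nat \<Rightarrow> real) \<Rightarrow> (nat \<Rightarrow> real) \<Rightarrow> real" where
  "fr n h lam x y = (\<Sum>i<n. x i * (1 - y i) * (1 + lam) * h i - y i * (1 - x i) * (1 - lam) * h i)"

lemma finite_feas: "finite (feas n p)"
proof -
  have "feas n p \<subseteq> (\<lambda>S i. if i \<in> S then 1 else 0) ` Pow {..<n}"
  proof
    fix x assume x: "x \<in> feas n p"
    have "x = (\<lambda>i. if i \<in> {k. k < n \<and> x k = 1} then 1 else 0)"
      using x unfolding feas_def by (auto intro!: ext) (metis not_le)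
    then show "x \<in> (\<lambda>S i. if i \<in> S then 1 else 0) ` Pow {..<n}" by blast
  qed
  then show ?thesis by (rule finite_subset) auto
qed

lemma feas_ne: "p \<le> n \<Longrightarrow> feas n p \<noteq> {}"
proof -
  assume p: "p \<le> n"
  have "(\<Sum>i<n. (if i < p then 1 else 0::real)) = real p"
  proof -
    have "(\<Sum>i<n. (if i < p then 1 else 0::real)) = real (card ({..<n} \<inter> {i. i < p}))"
      by (simp add: sum.If_cases)
    also have "{..<n} \<inter> {i. i < p} = {..<p}" using p by auto
    finally show ?thesis by simp
  qed
  then have "(\<lambda>i. if i < p then 1 else 0::real) \<in> feas n p"
    using p unfolding feas_def by auto
  then show ?thesis by blast
qed

lemma term_bound:
  assumes "x = 0 \<or> x = 1" "y = 0 \<or> y = 1" "(1 - lam) * h \<le> c" "c \<le> (1 + lam) * h"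
  shows "c * (x - y) \<le> x * (1 - y) * (1 + lam) * h - y * (1 - x) * (1 - lam) * (h::real)"
  using assms by auto

lemma max_regret_eq:
  assumes lam: "0 \<le> lam" "lam \<le> 1" and h: "\<forall>i<n. h i \<ge> 0" and p: "p \<le> n"
    and x: "x \<in> feas n p"
  shows "max_regret n p h lam x = Max ((\<lambda>y. fr n h lam x y) ` feas n p)"
proof -
  let ?F = "feas n p"
  let ?M = "Max ((\<lambda>y. fr n h lam x y) ` ?F)"
  have fin: "finite ?F" by (rule finite_feas)
  have ne: "?F \<noteq> {}" using p by (rule feas_ne)
  let ?g = "\<lambda>c. dotp n c x - Min ((\<lambda>y. dotp n c y) ` ?F)"
  have up: "?g c \<le> ?M" if c: "c \<in> unc n h lam" for c
  proof -
    have "Min ((\<lambda>y. dotp n c y) ` ?F) \<in> (\<lambda>y. dotp n c y) ` ?F" using fin ne by (intro Min_in) auto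
    then obtain y0 where y0: "y0 \<in> ?F" "Min ((\<lambda>y. dotp n c y) ` ?F) = dotp n c y0" by auto
    have "?g c = dotp n c x - dotp n c y0" using y0(2) by simp
    also have "\<dots> = (\<Sum>i<n. c i * (x i - y0 i))"
      unfolding dotp_def by (simp add: sum_subtractf right_diff_distrib)
    also have "\<dots> \<le> fr n h lam x y0" unfolding fr_def
      apply (rule sum_mono) apply (rule term_bound)
      using x y0(1) c unfolding feas_def unc_def by auto
    also have "\<dots> \<le> ?M" using fin y0(1) by auto
    finally show ?thesis .
  qed
  define cs where "cs = (\<lambda>i. if i < n then (if x i = 1 then (1 + lam) * h i else (1 - lam) * h i) else 0)"
  have csu: "cs \<in> unc n h lam" unfolding unc_def cs_def using h lam
    by (auto simp: mult_right_mono)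
  have eqy: "dotp n cs x - dotp n cs y = fr n h lam x y" if y: "y \<in> ?F" for y
  proof -
    have "dotp n cs x - dotp n cs y = (\<Sum>i<n. cs i * (x i - y i))"
      unfolding dotp_def by (simp add: sum_subtractf right_diff_distrib)
    also have "\<dots> = fr n h lam x y" unfolding fr_def
      apply (rule sum.cong, simp)
      using x y unfolding feas_def cs_def by (auto simp: algebra_simps)
    finally show ?thesis .
  qed
  have lo: "?M \<le> ?g cs"
  proof -
    have "?M \<in> (\<lambda>y. fr n h lam x y) ` ?F" using fin ne by (intro Max_in) auto
    then obtain y1 where y1: "y1 \<in> ?F" "?M = fr n h lam x y1" by auto
    have "Min ((\<lambda>y. dotp n cs y) ` ?F) \<in> (\<lambda>y. dotp n cs y) ` ?F" using fin ne by (intro Min_in) auto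
    then obtain y0 where y0: "y0 \<in> ?F" "Min ((\<lambda>y. dotp n cs y) ` ?F) = dotp n cs y0" by auto
    have "dotp n cs y0 \<le> dotp n cs y1" using y0 y1 fin
      by (metis (no_types, lifting) Min_le finite_imageI image_eqI)
    then show ?thesis using y1 y0 eqy[OF y1(1)] by simp
  qed
  have "max_regret n p h lam x = ?g cs"
    unfolding max_regret_def
    apply (rule cSup_eq_maximum)
    using csu up lo by force+
  then show ?thesis using up[OF csu] lo by simp
qed

lemma sum_two_change:
  fixes g g' :: "nat \<Rightarrow> real"
  assumes "i < n" "j < n" "i \<noteq> j" "\<And>k. k \<noteq> i \<Longrightarrow> k \<noteq> j \<Longrightarrow> g' k = g k"
  shows "(\<Sum>k<n. g' k) = (\<Sum>k<n. g k) + (g' i - g i) + (g' j - g j)"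
proof -
  have A: "(\<Sum>k<n. f k) = f i + f j + (\<Sum>k\<in>{..<n} - {i} - {j}. f k)" for f :: "nat \<Rightarrow> real"
    using assms(1-3) by (simp add: sum.remove[of "{..<n}" i] sum.remove[of "{..<n} - {i}" j])
  have "(\<Sum>k\<in>{..<n} - {i} - {j}. g' k) = (\<Sum>k\<in>{..<n} - {i} - {j}. g k)"
    using assms(4) by (intro sum.cong) auto
  then show ?thesis using A[of g] A[of g'] by simp
qed

lemma exchange:
  assumes x: "x \<in> feas n p" and ij: "i < n" "j < n" "x i = 1" "x j = 0" and hij: "h j \<le> h i"
    and lam: "0 \<le> lam" "lam \<le> 1" and hn: "h j \<ge> 0"
    and y: "y \<in> feas n p"
  shows "fr n h lam (x(i := 0, j := 1)) y \<le> fr n h lam x (y(i := y j, j := y i))"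
    and "y(i := y j, j := y i) \<in> feas n p"
proof -
  have ne: "i \<noteq> j" using ij by auto
  let ?ys = "y(i := y j, j := y i)"
  have "(\<Sum>k<n. ?ys k) = (\<Sum>k<n. y k) + (?ys i - y i) + (?ys j - y j)"
    by (rule sum_two_change) (use ij ne in auto)
  then show "?ys \<in> feas n p" using y ij ne unfolding feas_def by auto
  let ?x' = "x(i := 0, j := 1)"
  let ?T = "\<lambda>x y k. x k * (1 - y k) * (1 + lam) * h k - y k * (1 - x k) * (1 - lam) * h k"
  have e1: "fr n h lam ?x' y = fr n h lam x ?ys + (?T ?x' y i - ?T x ?ys i) + (?T ?x' y j - ?T x ?ys j)"
    unfolding fr_def by (rule sum_two_change) (use ij ne in auto)
  have yi: "y i = 0 \<or> y i = 1" "y j = 0 \<or> y j = 1" using y ij unfolding feas_def by auto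
  have "(?T ?x' y i - ?T x ?ys i) + (?T ?x' y j - ?T x ?ys j) =
        - ((1 - y j) * (1 + lam) * (h i - h j) + y i * (1 - lam) * (h i - h j))"
    using ne ij by (simp add: algebra_simps)
  also have "\<dots> \<le> 0"
  proof -
    have "(1 - y j) * (1 + lam) * (h i - h j) \<ge> 0" using yi lam hij by (auto intro!: mult_nonneg_nonneg)
    moreover have "y i * (1 - lam) * (h i - h j) \<ge> 0" using yi lam hij by (auto intro!: mult_nonneg_nonneg)
    ultimately show ?thesis by linarith
  qed
  finally show "fr n h lam ?x' y \<le> fr n h lam x ?ys" using e1 by linarith
qed

definition reg where "reg n p h lam x = Max ((\<lambda>y. fr n h lam x y) ` feas n p)"

lemma exchange_reg:
  assumes x: "x \<in> feas n p" and ij: "i < n" "j < n" "x i = 1" "x j = 0" and hij: "h j \<le> h i"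
    and lam: "0 \<le> lam" "lam \<le> 1" and hn: "h j \<ge> 0" and p: "p \<le> n"
  shows "reg n p h lam (x(i := 0, j := 1)) \<le> reg n p h lam x"
proof -
  have fin: "finite (feas n p)" by (rule finite_feas)
  have ne: "feas n p \<noteq> {}" using p by (rule feas_ne)
  show ?thesis unfolding reg_def
  proof (subst Max_le_iff, simp_all add: fin ne, intro ballI)
    fix y assume y: "y \<in> feas n p"
    have "fr n h lam (x(i := 0, j := 1)) y \<le> fr n h lam x (y(i := y j, j := y i))"
      by (rule exchange(1)) (use assms y in auto)
    also have "\<dots> \<le> Max ((\<lambda>y. fr n h lam x y) ` feas n p)"
      using exchange(2)[OF assms(1-9) y] fin by (intro Max_ge) auto
    finally show "fr n h lam (x(i := 0, j := 1)) y \<le> Max ((\<lambda>y. fr n h lam x y) ` feas n p)" .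
  qed
qed

lemma reg_opt:
  assumes S: "S \<in> feas n p" and Ssel: "\<forall>i<n. \<forall>j<n. S i = 1 \<longrightarrow> S j = 0 \<longrightarrow> h i \<le> h j"
    and h: "\<forall>i<n. h i \<ge> 0" and lam: "0 \<le> lam" "lam \<le> 1" and p: "p \<le> n"
  shows "\<forall>x. x \<in> feas n p \<longrightarrow> card {k. k < n \<and> x k = 1 \<and> S k = 0} = d \<longrightarrow> reg n p h lam S \<le> reg n p h lam x"
proof (induction d)
  case 0
  show ?case
  proof (intro allI impI)
    fix x assume x: "x \<in> feas n p" and c: "card {k. k < n \<and> x k = 1 \<and> S k = 0} = 0"
    have e: "{k. k < n \<and> x k = 1 \<and> S k = 0} = {}" using c by simp
    have sub: "\<forall>k<n. S k - x k \<ge> 0" using e x S unfolding feas_def by force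
    have "(\<Sum>k<n. S k - x k) = 0" using x S unfolding feas_def by (simp add: sum_subtractf)
    then have "\<forall>k\<in>{..<n}. S k - x k = 0" using sub by (subst sum_nonneg_eq_0_iff[symmetric]) auto
    then have "x = S" using x S unfolding feas_def
    proof (intro ext)
      fix k show "x k = S k"
      proof (cases "k < n")
        case True then show ?thesis using \<open>\<forall>k\<in>{..<n}. S k - x k = 0\<close> by auto
      next
        case False then show ?thesis using x S unfolding feas_def by auto
      qed
    qed
    then show "reg n p h lam S \<le> reg n p h lam x" by simp
  qed
next
  case (Suc d)
  show ?case
  proof (intro allI impI)
    fix x assume x: "x \<in> feas n p" and c: "card {k. k < n \<and> x k = 1 \<and> S k = 0} = Suc d"
    let ?D = "{k. k < n \<and> x k = 1 \<and> S k = 0}"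
    obtain i where i: "i \<in> ?D" using c by (metis card.empty ex_in_conv nat.distinct(1))
    have "\<exists>j<n. S j = 1 \<and> x j = 0"
    proof (rule ccontr)
      assume nj: "\<not> ?thesis"
      have le: "\<forall>k\<in>{..<n}. S k - x k \<le> 0" using nj x S unfolding feas_def by force
      have "(\<Sum>k<n. S k - x k) = (S i - x i) + (\<Sum>k\<in>{..<n} - {i}. S k - x k)"
        using i by (intro sum.remove) auto
      also have "\<dots> < 0" using i le by (smt (verit) DiffD1 sum_nonpos mem_Collect_eq)
      finally have "(\<Sum>k<n. S k - x k) < 0" .
      moreover have "(\<Sum>k<n. S k - x k) = 0" using x S unfolding feas_def by (simp add: sum_subtractf)
      ultimately show False by simp
    qed
    then obtain j where j: "j < n" "S j = 1" "x j = 0" by blast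
    have hij: "h j \<le> h i" using Ssel i j by auto
    let ?x' = "x(i := 0, j := 1)"
    have ij: "i \<noteq> j" using i j by auto
    have x'f: "?x' \<in> feas n p"
    proof -
      have "(\<Sum>k<n. ?x' k) = (\<Sum>k<n. x k) + (?x' i - x i) + (?x' j - x j)"
        by (rule sum_two_change) (use i j ij in auto)
      then show ?thesis using x i j ij unfolding feas_def by auto
    qed
    have "{k. k < n \<and> ?x' k = 1 \<and> S k = 0} = ?D - {i}" using i j ij by auto
    then have "card {k. k < n \<and> ?x' k = 1 \<and> S k = 0} = d" using c i by simp
    then have "reg n p h lam S \<le> reg n p h lam ?x'" using Suc.IH x'f by blast
    also have "\<dots> \<le> reg n p h lam x"
      by (rule exchange_reg) (use x i j hij lam h p in auto)
    finally show "reg n p h lam S \<le> reg n p h lam x" .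
  qed
qed

lemma continuous_on_Max:
  assumes "finite F" "F \<noteq> {}" "\<forall>y\<in>F. continuous_on A (g y)"
  shows "continuous_on A (\<lambda>t. Max ((\<lambda>y. g y t) ` F) :: real)"
  using assms
proof (induction F rule: finite_ne_induct)
  case (singleton x)
  then show ?case by simp
next
  case (insert x F)
  have "(\<lambda>t. Max ((\<lambda>y. g y t) ` insert x F)) = (\<lambda>t. max (g x t) (Max ((\<lambda>y. g y t) ` F)))"
    using insert by (auto intro!: ext Max_insert)
  then show ?case using insert by (auto intro!: continuous_on_max)
qed

lemma main_math:
  assumes S: "S \<in> feas n p" and Ssel: "\<forall>i<n. \<forall>j<n. S i = 1 \<longrightarrow> S j = 0 \<longrightarrow> h i \<le> h j"
    and h: "\<forall>i<n. h i \<ge> 0" and p: "p \<le> n" and y: "y \<in> feas n p"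
  shows "compromise_val n p h S \<le> compromise_val n p h y"
proof -
  have fin: "finite (feas n p)" by (rule finite_feas)
  have ne: "feas n p \<noteq> {}" using p by (rule feas_ne)
  have ce: "compromise_val n p h x = integral {0..1} (\<lambda>lam. reg n p h lam x)" if "x \<in> feas n p" for x
    unfolding compromise_val_def reg_def
    by (rule integral_cong) (use max_regret_eq[OF _ _ h p that] in auto)
  have cont: "continuous_on {0..1} (\<lambda>lam. reg n p h lam x)" for x
    unfolding reg_def
    by (rule continuous_on_Max[OF fin ne]) (auto simp: fr_def intro!: continuous_intros)
  have "integral {0..1} (\<lambda>lam. reg n p h lam S) \<le> integral {0..1} (\<lambda>lam. reg n p h lam y)"
    apply (rule integral_le)
    using cont integrable_continuous_interval apply blast
    using cont integrable_continuous_interval apply blast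
    using reg_opt[OF S Ssel h _ _ p] y by auto
  then show ?thesis using ce S y by simp
qed



fun aok :: "nat \<Rightarrow> aexp \<Rightarrow> mem \<Rightarrow> bool" where
  "aok V (N k) s = (bitlen k \<le> V)"
| "aok V (Ld a) s = (aok V a s \<and> bitlen (fst (aval a s)) \<le> V \<and> bitlen (s (nat (fst (aval a s)))) \<le> V)"
| "aok V (Plus a b) s = (aok V a s \<and> aok V b s \<and> bitlen (fst (aval a s)) \<le> V \<and> bitlen (fst (aval b s)) \<le> V)"
| "aok V (Minus a b) s = (aok V a s \<and> aok V b s \<and> bitlen (fst (aval a s)) \<le> V \<and> bitlen (fst (aval b s)) \<le> V)"
| "aok V (Times a b) s = (aok V a s \<and> aok V b s \<and> bitlen (fst (aval a s)) \<le> V \<and> bitlen (fst (aval b s)) \<le> V)"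
| "aok V (Div a b) s = (aok V a s \<and> aok V b s \<and> bitlen (fst (aval a s)) \<le> V \<and> bitlen (fst (aval b s)) \<le> V)"
| "aok V (Mod a b) s = (aok V a s \<and> aok V b s \<and> bitlen (fst (aval a s)) \<le> V \<and> bitlen (fst (aval b s)) \<le> V)"

fun asz :: "aexp \<Rightarrow> nat" where
  "asz (N k) = 1"
| "asz (Ld a) = asz a + 2"
| "asz (Plus a b) = asz a + asz b + 2"
| "asz (Minus a b) = asz a + asz b + 2"
| "asz (Times a b) = asz a + asz b + 2"
| "asz (Div a b) = asz a + asz b + 2"
| "asz (Mod a b) = asz a + asz b + 2"

fun bok :: "nat \<Rightarrow> bexp \<Rightarrow> mem \<Rightarrow> bool" where
  "bok V (Less a b) s = (aok V a s \<and> aok V b s \<and> bitlen (fst (aval a s)) \<le> V \<and> bitlen (fst (aval b s)) \<le> V)"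
| "bok V (Eq a b) s = (aok V a s \<and> aok V b s \<and> bitlen (fst (aval a s)) \<le> V \<and> bitlen (fst (aval b s)) \<le> V)"
| "bok V (Neg b) s = (bok V b s)"
| "bok V (Conj a b) s = (bok V a s \<and> bok V b s)"

fun bsz :: "bexp \<Rightarrow> nat" where
  "bsz (Less a b) = asz a + asz b + 2"
| "bsz (Eq a b) = asz a + asz b + 2"
| "bsz (Neg b) = bsz b + 1"
| "bsz (Conj a b) = bsz a + bsz b + 1"

lemma aok_cost: "aok V a s \<Longrightarrow> snd (aval a s) \<le> asz a * V"
  by (induction a) (auto split: prod.splits simp: algebra_simps)

lemma bok_cost: "bok V b s \<Longrightarrow> 1 \<le> V \<Longrightarrow> snd (bval b s) \<le> bsz b * V"
  by (induction b) (auto split: prod.splits dest!: aok_cost simp: algebra_simps)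

lemma store_b:
  assumes "aok V a s" "aok V b s" "s' = s(nat (fst (aval a s)) := fst (aval b s))" "1 \<le> V"
  shows "\<exists>t. big_step (Store a b) s t s' \<and> t \<le> (asz a + asz b + 1) * V"
proof -
  obtain i c1 where 1: "aval a s = (i, c1)" by force
  obtain v c2 where 2: "aval b s = (v, c2)" by force
  have "big_step (Store a b) s (c1 + c2 + 1) s'" using big_step.Store[OF 1 2] assms(3) 1 2 by simp
  moreover have "c1 + c2 + 1 \<le> (asz a + asz b + 1) * V"
    using aok_cost[OF assms(1)] aok_cost[OF assms(2)] 1 2 assms(4) by (simp add: algebra_simps)
  ultimately show ?thesis by blast
qed

lemma skip_b: "1 \<le> V \<Longrightarrow> \<exists>t. big_step SKIP s t s \<and> t \<le> V"
  using big_step.Skip by blast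

lemma seq_b:
  assumes "\<exists>t. big_step c1 s t s2 \<and> t \<le> K1" "\<exists>t. big_step c2 s2 t s3 \<and> t \<le> K2"
  shows "\<exists>t. big_step (Seq c1 c2) s t s3 \<and> t \<le> K1 + K2 + 1"
  using assms big_step.Seq by fastforce

lemma ifT_b:
  assumes "bok V b s" "fst (bval b s)" "1 \<le> V" "\<exists>t. big_step c1 s t s' \<and> t \<le> K"
  shows "\<exists>t. big_step (If b c1 c2) s t s' \<and> t \<le> K + (bsz b + 1) * V"
proof -
  obtain c where 1: "bval b s = (True, c)" using assms(2) by (cases "bval b s") auto
  obtain t where t: "big_step c1 s t s'" "t \<le> K" using assms(4) by blast
  have "big_step (If b c1 c2) s (c + t + 1) s'" using big_step.IfT[OF 1 t(1)] .
  moreover have "c \<le> bsz b * V" using bok_cost[OF assms(1,3)] 1 by simp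
  ultimately show ?thesis using t assms(3) by (intro exI[of _ "c + t + 1"]) (auto simp: algebra_simps)
qed

lemma ifF_b:
  assumes "bok V b s" "\<not> fst (bval b s)" "1 \<le> V" "\<exists>t. big_step c2 s t s' \<and> t \<le> K"
  shows "\<exists>t. big_step (If b c1 c2) s t s' \<and> t \<le> K + (bsz b + 1) * V"
proof -
  obtain c where 1: "bval b s = (False, c)" using assms(2) by (cases "bval b s") auto
  obtain t where t: "big_step c2 s t s'" "t \<le> K" using assms(4) by blast
  have "big_step (If b c1 c2) s (c + t + 1) s'" using big_step.IfF[OF 1 t(1)] .
  moreover have "c \<le> bsz b * V" using bok_cost[OF assms(1,3)] 1 by simp
  ultimately show ?thesis using t assms(3) by (intro exI[of _ "c + t + 1"]) (auto simp: algebra_simps)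
qed

lemma while_b:
  assumes step: "\<And>s. P s \<Longrightarrow> bok V b s \<and>
     (if fst (bval b s) then (\<exists>s'. (\<exists>t. big_step body s t s' \<and> t \<le> K) \<and> P s' \<and> f s' < f s) else Q s)"
    and V: "1 \<le> V"
  shows "P s \<Longrightarrow> \<exists>t s'. big_step (While b body) s t s' \<and> Q s' \<and> t \<le> (f s + 1) * (K + (bsz b + 1) * V)"
proof (induction "f s" arbitrary: s rule: less_induct)
  case less
  note st = step[OF less.prems]
  obtain bv c where bv: "bval b s = (bv, c)" by force
  have c: "c \<le> bsz b * V" using bok_cost[OF _ V, of b s] st bv by simp
  show ?case
  proof (cases bv)
    case False
    then have "big_step (While b body) s (c + 1) s" using big_step.WhileF bv by simp
    then show ?thesis using st bv False c V
      by (intro exI[of _ "c + 1"] exI[of _ s]) (auto simp: algebra_simps)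
  next
    case True
    then obtain s' t1 where s': "big_step body s t1 s'" "t1 \<le> K" "P s'" "f s' < f s" using st bv by auto
    obtain t2 s'' where s'': "big_step (While b body) s' t2 s''" "Q s''" "t2 \<le> (f s' + 1) * (K + (bsz b + 1) * V)"
      using less.hyps[OF s'(4) s'(3)] by blast
    have "big_step (While b body) s (c + t1 + t2 + 1) s''"
      using big_step.WhileT[of b s c body t1 s' t2 s''] bv True s' s'' by simp
    moreover have "c + t1 + t2 + 1 \<le> (f s + 1) * (K + (bsz b + 1) * V)"
    proof -
      have "(f s' + 1) * (K + (bsz b + 1) * V) \<le> f s * (K + (bsz b + 1) * V)"
        using s'(4) by (intro mult_right_mono) auto
      then show ?thesis using s'(2) s''(3) c V by (simp add: algebra_simps)
    qed
    ultimately show ?thesis using s'' by blast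
  qed
qed

lemma bitlen_le_abs: "bitlen v \<le> nat \<bar>v\<bar> + 1"
proof -
  have "nat \<bar>v\<bar> < 2 ^ nat \<bar>v\<bar>" by (rule less_exp)
  then have "floorlog 2 (nat \<bar>v\<bar>) \<le> nat \<bar>v\<bar>" by (simp add: floorlog_le_iff)
  then show ?thesis unfolding bitlen_def by simp
qed

lemma bitlen_mult: "bitlen (a * b) \<le> bitlen a + bitlen b"
proof -
  have la: "nat \<bar>a\<bar> < 2 ^ floorlog 2 (nat \<bar>a\<bar>)" using floorlog_le_iff[of 2 "nat \<bar>a\<bar>" "floorlog 2 (nat \<bar>a\<bar>)"] by simp
  have lb: "nat \<bar>b\<bar> < 2 ^ floorlog 2 (nat \<bar>b\<bar>)" using floorlog_le_iff[of 2 "nat \<bar>b\<bar>" "floorlog 2 (nat \<bar>b\<bar>)"] by simp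
  have "nat \<bar>a * b\<bar> = nat \<bar>a\<bar> * nat \<bar>b\<bar>" by (simp add: abs_mult nat_mult_distrib)
  also have "\<dots> < 2 ^ floorlog 2 (nat \<bar>a\<bar>) * 2 ^ floorlog 2 (nat \<bar>b\<bar>)"
    using la lb by (intro mult_strict_mono) auto
  also have "\<dots> = 2 ^ (floorlog 2 (nat \<bar>a\<bar>) + floorlog 2 (nat \<bar>b\<bar>))" by (simp add: power_add)
  finally have "floorlog 2 (nat \<bar>a * b\<bar>) \<le> floorlog 2 (nat \<bar>a\<bar>) + floorlog 2 (nat \<bar>b\<bar>)"
    by (simp add: floorlog_le_iff)
  then show ?thesis unfolding bitlen_def by simp
qed




abbreviation "nN \<equiv> Ld (N 0)"
abbreviation "bA \<equiv> Plus (Times (N 2) nN) (N 2)"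
abbreviation "vI \<equiv> Ld bA"
abbreviation "vJ \<equiv> Ld (Plus bA (N 1))"
abbreviation "vR \<equiv> Ld (Plus bA (N 2))"
abbreviation "numE e \<equiv> Ld (Plus (Times (N 2) e) (N 2))"
abbreviation "denE e \<equiv> Ld (Plus (Times (N 2) e) (N 3))"
abbreviation "lhsE \<equiv> Times (numE vJ) (denE vI)"
abbreviation "rhsE \<equiv> Times (numE vI) (denE vJ)"

definition "incR = Store (Plus bA (N 2)) (Plus vR (N 1))"
definition "ibody = Seq (If (Less lhsE rhsE) incR (If (Conj (Eq lhsE rhsE) (Less vJ vI)) incR SKIP))
                        (Store (Plus bA (N 1)) (Plus vJ (N 1)))"
definition "iloop = While (Less vJ nN) ibody"

abbreviation "markA \<equiv> Plus (Plus bA (N 3)) vI"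
definition "obody = Seq (Store (Plus bA (N 1)) (N 0)) (Seq (Store (Plus bA (N 2)) (N 0)) (Seq iloop
   (Seq (If (Less vR (Ld (N 1))) (Store markA (N 1)) (Store markA (N 0))) (Store bA (Plus vI (N 1))))))"
definition "phase1 = Seq (Store bA (N 0)) (While (Less vI nN) obody)"

abbreviation "mkE e \<equiv> Ld (Plus (Plus bA (N 3)) e)"
abbreviation "cE \<equiv> Ld (N 1)"
definition "cbody = Seq (Store cE (mkE cE)) (Store (N 1) (Minus cE (N 1)))"
definition "phase2 = Seq (Store (N 1) (Minus nN (N 1))) (Seq (While (Less (N 1) cE) cbody)
    (Seq (Store (N 1) (mkE (N 1))) (Store (N 0) (mkE (N 0)))))"
definition "theprog = Seq phase1 phase2"

abbreviation "numv ch k \<equiv> fst (quotient_of (ch k))"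
abbreviation "denv ch k \<equiv> snd (quotient_of (ch k))"

definition "ltq ch j i = (numv ch j * denv ch i < numv ch i * denv ch j \<or>
    (numv ch j * denv ch i = numv ch i * denv ch j \<and> j < i))"

definition M1 where "M1 n p ch i j r mk = (\<lambda>a. if a = 2*n+2 then int i else if a = 2*n+3 then int j else if a = 2*n+4 then int r
   else if 2*n+5 \<le> a then mk (a - (2*n+5)) else enc n p ch a)"

definition "Vb n p ch = 2 * input_size n p ch + 8 * n + 20"

lemma mono_b: "\<exists>t. big_step c s t s' \<and> t \<le> K \<Longrightarrow> K \<le> K' \<Longrightarrow> \<exists>t. big_step c s t s' \<and> t \<le> K'"
  by auto

context
  fixes n p :: nat and ch :: "nat \<Rightarrow> rat"
  assumes n1: "n \<ge> 1" and pn: "p \<le> n"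
begin

lemma size_ge: "2 + 2 * n \<le> input_size n p ch"
proof -
  have "(\<Sum>a<2 + 2 * n. 1) \<le> input_size n p ch" unfolding input_size_def
    by (rule sum_mono) (simp add: bitlen_def)
  then show ?thesis by simp
qed

lemma enc_bl: "a < 2 + 2 * n \<Longrightarrow> bitlen (enc n p ch a) \<le> input_size n p ch"
  unfolding input_size_def by (rule member_le_sum) auto

lemma num_bl: "k < n \<Longrightarrow> bitlen (numv ch k) \<le> input_size n p ch"
  using enc_bl[of "2 * k + 2"] by (simp add: enc_def)

lemma den_bl: "k < n \<Longrightarrow> bitlen (denv ch k) \<le> input_size n p ch"
  using enc_bl[of "2 * k + 3"] by (simp add: enc_def)

lemma V1: "1 \<le> Vb n p ch" by (simp add: Vb_def)

lemma bl_small [simp]: "\<bar>v\<bar> \<le> 8 * int n + 19 \<Longrightarrow> bitlen v \<le> Vb n p ch"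
  using bitlen_le_abs[of v] unfolding Vb_def by linarith

lemma bl_prod [simp]: "j < n \<Longrightarrow> i < n \<Longrightarrow> bitlen (numv ch j * denv ch i) \<le> Vb n p ch"
  using bitlen_mult[of "numv ch j" "denv ch i"] num_bl[of j] den_bl[of i] unfolding Vb_def by linarith

lemma bl_num [simp]: "k < n \<Longrightarrow> bitlen (numv ch k) \<le> Vb n p ch"
  using num_bl[of k] unfolding Vb_def by linarith

lemma bl_den [simp]: "k < n \<Longrightarrow> bitlen (denv ch k) \<le> Vb n p ch"
  using den_bl[of k] unfolding Vb_def by linarith

lemma enc0 [simp]: "enc n p ch 0 = int n" by (simp add: enc_def)
lemma enc1 [simp]: "enc n p ch (Suc 0) = int p" by (simp add: enc_def)

lemmas evs = nat_add_distrib nat_mult_distrib M1_def enc_def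

lemma incR_b: "i < n \<Longrightarrow> j \<le> n \<Longrightarrow> r \<le> n \<Longrightarrow>
   \<exists>t. big_step incR (M1 n p ch i j r mk) t (M1 n p ch i j (r + 1) mk) \<and> t \<le> 100 * Vb n p ch"
  unfolding incR_def
  apply (rule mono_b)
   apply (rule store_b[where V="Vb n p ch"])
  apply (simp_all add: V1 nat_add_distrib nat_mult_distrib M1_def)
  using V1 by (auto simp: fun_eq_iff)

lemma ibody_b: "i < n \<Longrightarrow> j < n \<Longrightarrow> r \<le> j \<Longrightarrow>
   \<exists>t. big_step ibody (M1 n p ch i j r mk) t (M1 n p ch i (j + 1) (r + (if ltq ch j i then 1 else 0)) mk)
      \<and> t \<le> 1000 * Vb n p ch"
proof -
  assume a: "i < n" "j < n" "r \<le> j"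
  let ?s = "M1 n p ch i j r mk"
  let ?r = "r + (if ltq ch j i then 1 else 0)"
  have b1: "bok (Vb n p ch) (Less lhsE rhsE) ?s" using a by (simp add: evs)
  have b2: "bok (Vb n p ch) (Conj (Eq lhsE rhsE) (Less vJ vI)) ?s" using a by (simp add: evs)
  have ifs: "\<exists>t. big_step (If (Less lhsE rhsE) incR (If (Conj (Eq lhsE rhsE) (Less vJ vI)) incR SKIP)) ?s t
         (M1 n p ch i j ?r mk) \<and> t \<le> 100 * Vb n p ch + (bsz (Less lhsE rhsE) + 1) * Vb n p ch
          + (bsz (Conj (Eq lhsE rhsE) (Less vJ vI)) + 1) * Vb n p ch"
  proof (cases "numv ch j * denv ch i < numv ch i * denv ch j")
    case True
    then have lt: "ltq ch j i" by (simp add: ltq_def)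
    show ?thesis
      apply (rule mono_b)
       apply (rule ifT_b[OF b1 _ V1])
      using True a apply (simp add: evs)
      using incR_b[of i j r mk] a lt apply simp
      by simp
  next
    case False
    note F = False
    show ?thesis
    proof (cases "numv ch j * denv ch i = numv ch i * denv ch j \<and> j < i")
      case True
      then have lt: "ltq ch j i" by (simp add: ltq_def)
      show ?thesis
        apply (rule mono_b)
         apply (rule ifF_b[OF b1 _ V1])
        using F a apply (simp add: evs)
        apply (rule ifT_b[OF b2 _ V1])
        using True a apply (simp add: evs)
        using incR_b[of i j r mk] a lt apply simp
        by simp
    next
      case False
      then have lt: "\<not> ltq ch j i" using F by (auto simp: ltq_def)
      show ?thesis
        apply (rule mono_b)
         apply (rule ifF_b[OF b1 _ V1])
        using F a apply (simp add: evs)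
        apply (rule ifF_b[OF b2 _ V1])
        using False a apply (simp add: evs)
        using skip_b[OF V1, of ?s] lt apply simp
        by simp
    qed
  qed
  have st: "\<exists>t. big_step (Store (Plus bA (N 1)) (Plus vJ (N 1))) (M1 n p ch i j ?r mk) t
       (M1 n p ch i (j + 1) ?r mk) \<and> t \<le> 100 * Vb n p ch"
    apply (rule mono_b)
     apply (rule store_b[where V="Vb n p ch"])
    using a apply (simp_all add: V1 nat_add_distrib nat_mult_distrib M1_def)
    using V1 by (auto simp: fun_eq_iff)
  show ?thesis unfolding ibody_def
    apply (rule mono_b)
     apply (rule seq_b[OF ifs st])
    using V1 by simp
qed

lemma card_step: "card {x. x < Suc j \<and> P x} = card {x. x < j \<and> P x} + (if P j then 1 else 0)"
proof -
  have fin: "finite {x. x < j \<and> P x}" by auto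
  show ?thesis
  proof (cases "P j")
    case True
    then have "{x. x < Suc j \<and> P x} = insert j {x. x < j \<and> P x}" by (auto simp: less_Suc_eq)
    then show ?thesis using True fin by simp
  next
    case False
    then have "{x. x < Suc j \<and> P x} = {x. x < j \<and> P x}" by (auto simp: less_Suc_eq)
    then show ?thesis using False by simp
  qed
qed

lemma card_lt_le: "card {x. x < j \<and> P x} \<le> j"
proof -
  have "card {x. x < j \<and> P x} \<le> card {..<j}" by (rule card_mono) auto
  then show ?thesis by simp
qed

definition "rk i = card {j. j < n \<and> ltq ch j i}"

lemma iloop_b: "i < n \<Longrightarrow>
   \<exists>t s'. big_step iloop (M1 n p ch i 0 0 mk) t s' \<and> s' = M1 n p ch i n (rk i) mk
      \<and> t \<le> (n + 1) * (1000 * Vb n p ch + (bsz (Less vJ nN) + 1) * Vb n p ch)"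
proof -
  assume i: "i < n"
  let ?P = "\<lambda>s. \<exists>j. j \<le> n \<and> s = M1 n p ch i j (card {x. x < j \<and> ltq ch x i}) mk"
  let ?f = "\<lambda>s. n - nat (s (2 * n + 3))"
  let ?Q = "\<lambda>s. s = M1 n p ch i n (rk i) mk"
  have "\<exists>t s'. big_step (While (Less vJ nN) ibody) (M1 n p ch i 0 0 mk) t s' \<and> ?Q s'
     \<and> t \<le> (?f (M1 n p ch i 0 0 mk) + 1) * (1000 * Vb n p ch + (bsz (Less vJ nN) + 1) * Vb n p ch)"
  proof (rule while_b[where P="?P"])
    fix s assume "?P s"
    then obtain j where j: "j \<le> n" "s = M1 n p ch i j (card {x. x < j \<and> ltq ch x i}) mk" by blast
    have bk: "bok (Vb n p ch) (Less vJ nN) s" using j i by (simp add: evs)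
    show "bok (Vb n p ch) (Less vJ nN) s \<and>
       (if fst (bval (Less vJ nN) s) then (\<exists>s'. (\<exists>t. big_step ibody s t s' \<and> t \<le> 1000 * Vb n p ch) \<and> ?P s' \<and> ?f s' < ?f s) else ?Q s)"
    proof (cases "j < n")
      case True
      have bv: "fst (bval (Less vJ nN) s)" using j True i by (simp add: evs)
      let ?s' = "M1 n p ch i (j + 1) (card {x. x < j \<and> ltq ch x i} + (if ltq ch j i then 1 else 0)) mk"
      have "\<exists>t. big_step ibody s t ?s' \<and> t \<le> 1000 * Vb n p ch"
        using ibody_b[OF i True card_lt_le] j by simp
      moreover have "?P ?s'" using True card_step[of j "\<lambda>x. ltq ch x i"] by (intro exI[of _ "j+1"]) simp
      moreover have "?f ?s' < ?f s" using j True by (simp add: M1_def)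
      ultimately show ?thesis using bk bv by auto
    next
      case False
      then have jn: "j = n" using j by simp
      have bv: "\<not> fst (bval (Less vJ nN) s)" using j jn i by (simp add: evs)
      show ?thesis using bk bv j jn by (simp add: rk_def)
    qed
  next
    show "1 \<le> Vb n p ch" by (rule V1)
  next
    show "?P (M1 n p ch i 0 0 mk)" by (intro exI[of _ 0]) simp
  qed
  moreover have "?f (M1 n p ch i 0 0 mk) = n" by (simp add: M1_def)
  ultimately show ?thesis unfolding iloop_def by auto
qed

definition "markv i = (if rk i < p then 1 else (0::int))"

lemma rk_le: "rk i \<le> n" unfolding rk_def by (rule card_lt_le)

abbreviation "Ko \<equiv> (n + 1) * (1000 * Vb n p ch + 20 * Vb n p ch) + 2000 * Vb n p ch"

lemma obody_b: "i < n \<Longrightarrow>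
   \<exists>t s'. big_step obody (M1 n p ch i j r mk) t s' \<and> s' = M1 n p ch (i + 1) n (rk i) (mk(i := markv i))
      \<and> t \<le> Ko"
proof -
  assume i: "i < n"
  have s1: "\<exists>t. big_step (Store (Plus bA (N 1)) (N 0)) (M1 n p ch i j r mk) t (M1 n p ch i 0 r mk) \<and> t \<le> 100 * Vb n p ch"
    apply (rule mono_b)
     apply (rule store_b[where V="Vb n p ch"])
    using i apply (simp_all add: V1 nat_add_distrib nat_mult_distrib M1_def)
    using V1 by (auto simp: fun_eq_iff)
  have s2: "\<exists>t. big_step (Store (Plus bA (N 2)) (N 0)) (M1 n p ch i 0 r mk) t (M1 n p ch i 0 0 mk) \<and> t \<le> 100 * Vb n p ch"
    apply (rule mono_b)
     apply (rule store_b[where V="Vb n p ch"])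
    using i apply (simp_all add: V1 nat_add_distrib nat_mult_distrib M1_def)
    using V1 by (auto simp: fun_eq_iff)
  have s3: "\<exists>t. big_step iloop (M1 n p ch i 0 0 mk) t (M1 n p ch i n (rk i) mk) \<and> t \<le> (n + 1) * (1000 * Vb n p ch + 20 * Vb n p ch)"
    using iloop_b[OF i, of mk] by simp
  have bk: "bok (Vb n p ch) (Less vR (Ld (N 1))) (M1 n p ch i n (rk i) mk)" using i rk_le[of i] pn by (simp add: evs)
  have s4: "\<exists>t. big_step (If (Less vR (Ld (N 1))) (Store markA (N 1)) (Store markA (N 0))) (M1 n p ch i n (rk i) mk) t
     (M1 n p ch i n (rk i) (mk(i := markv i))) \<and> t \<le> 200 * Vb n p ch"
  proof (cases "rk i < p")
    case True
    show ?thesis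
      apply (rule mono_b)
       apply (rule ifT_b[OF bk _ V1])
      using True i apply (simp add: evs)
       apply (rule store_b[where V="Vb n p ch"])
      using i apply (simp_all add: V1 nat_add_distrib nat_mult_distrib M1_def)
      using V1 True by (auto simp: fun_eq_iff markv_def)
  next
    case False
    show ?thesis
      apply (rule mono_b)
       apply (rule ifF_b[OF bk _ V1])
      using False i apply (simp add: evs)
       apply (rule store_b[where V="Vb n p ch"])
      using i apply (simp_all add: V1 nat_add_distrib nat_mult_distrib M1_def)
      using V1 False by (auto simp: fun_eq_iff markv_def)
  qed
  have s5: "\<exists>t. big_step (Store bA (Plus vI (N 1))) (M1 n p ch i n (rk i) (mk(i := markv i))) t
      (M1 n p ch (i + 1) n (rk i) (mk(i := markv i))) \<and> t \<le> 100 * Vb n p ch"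
    apply (rule mono_b)
     apply (rule store_b[where V="Vb n p ch"])
    using i apply (simp_all add: V1 nat_add_distrib nat_mult_distrib M1_def)
    using V1 by (auto simp: fun_eq_iff)
  show ?thesis unfolding obody_def
    using seq_b[OF s1 seq_b[OF s2 seq_b[OF s3 seq_b[OF s4 s5]]]] V1 by fastforce
qed

definition "mkf i = (\<lambda>k. if k < i then markv k else 0)"

lemma phase1_b: "\<exists>t s'. big_step phase1 (enc n p ch) t s' \<and>
    (\<exists>j r. s' = M1 n p ch n j r (mkf n)) \<and>
    t \<le> 100 * Vb n p ch + (n + 1) * (Ko + 17 * Vb n p ch) + 1"
proof -
  have s0: "\<exists>t. big_step (Store bA (N 0)) (enc n p ch) t (M1 n p ch 0 0 0 (\<lambda>_. 0)) \<and> t \<le> 100 * Vb n p ch"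
    apply (rule mono_b)
     apply (rule store_b[where V="Vb n p ch"])
    apply (simp_all add: V1 nat_add_distrib nat_mult_distrib)
    using V1 by (auto simp: fun_eq_iff M1_def enc_def)
  let ?P = "\<lambda>s. \<exists>i j r. i \<le> n \<and> s = M1 n p ch i j r (mkf i)"
  let ?f = "\<lambda>s. n - nat (s (2 * n + 2))"
  let ?Q = "\<lambda>s. \<exists>j r. s = M1 n p ch n j r (mkf n)"
  have w: "\<exists>t s'. big_step (While (Less vI nN) obody) (M1 n p ch 0 0 0 (\<lambda>_. 0)) t s' \<and> ?Q s'
     \<and> t \<le> (?f (M1 n p ch 0 0 0 (\<lambda>_. 0)) + 1) * (Ko + (bsz (Less vI nN) + 1) * Vb n p ch)"
  proof (rule while_b[where P="?P"])
    fix s assume "?P s"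
    then obtain i j r where ij: "i \<le> n" "s = M1 n p ch i j r (mkf i)" by blast
    have bk: "bok (Vb n p ch) (Less vI nN) s" using ij by (simp add: evs)
    show "bok (Vb n p ch) (Less vI nN) s \<and>
       (if fst (bval (Less vI nN) s) then (\<exists>s'. (\<exists>t. big_step obody s t s' \<and> t \<le> Ko) \<and> ?P s' \<and> ?f s' < ?f s) else ?Q s)"
    proof (cases "i < n")
      case True
      have bv: "fst (bval (Less vI nN) s)" using ij True by (simp add: evs)
      let ?s' = "M1 n p ch (i + 1) n (rk i) (mkf (i + 1))"
      have "(mkf i)(i := markv i) = mkf (i + 1)" by (auto simp: mkf_def fun_eq_iff)
      then have "\<exists>t. big_step obody s t ?s' \<and> t \<le> Ko"
        using obody_b[OF True, of j r "mkf i"] ij by auto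
      moreover have "?P ?s'" using True by (intro exI[of _ "i+1"] exI[of _ n] exI[of _ "rk i"]) auto
      moreover have "?f ?s' < ?f s" using ij True by (simp add: M1_def)
      ultimately have E: "\<exists>s'. (\<exists>t. big_step obody s t s' \<and> t \<le> Ko) \<and> ?P s' \<and> ?f s' < ?f s" by blast
      show ?thesis by (simp only: bv if_True) (use bk E in blast)
    next
      case False
      then have jn: "i = n" using ij by simp
      have bv: "\<not> fst (bval (Less vI nN) s)" using ij jn by (simp add: evs)
      show ?thesis using bk bv ij jn by auto
    qed
  next
    show "1 \<le> Vb n p ch" by (rule V1)
  next
    have "mkf 0 = (\<lambda>_. 0)" by (simp add: mkf_def fun_eq_iff)
    then show "?P (M1 n p ch 0 0 0 (\<lambda>_. 0))" by (intro exI[of _ 0]) simp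
  qed
  have f0: "?f (M1 n p ch 0 0 0 (\<lambda>_. 0)) = n" by (simp add: M1_def)
  obtain t1 where t1: "big_step (Store bA (N 0)) (enc n p ch) t1 (M1 n p ch 0 0 0 (\<lambda>_. 0))" "t1 \<le> 100 * Vb n p ch"
    using s0 by blast
  obtain t2 s' where t2: "big_step (While (Less vI nN) obody) (M1 n p ch 0 0 0 (\<lambda>_. 0)) t2 s'" "?Q s'"
     "t2 \<le> (?f (M1 n p ch 0 0 0 (\<lambda>_. 0)) + 1) * (Ko + (bsz (Less vI nN) + 1) * Vb n p ch)"
    using w by blast
  have t2': "t2 \<le> (n + 1) * (Ko + 17 * Vb n p ch)" using t2(3) unfolding f0 by simp
  show ?thesis unfolding phase1_def
    using big_step.Seq[OF t1(1) t2(1)] t1(2) t2(2) t2' by (intro exI[of _ "t1 + t2 + 1"] exI[of _ s']) auto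
qed

definition "M2 j r k = (\<lambda>a. if a = 1 then int k else if 2 \<le> a \<and> k < a \<and> a < n then markv a else M1 n p ch n j r (mkf n) a)"

lemma markv_abs [simp]: "\<bar>markv k\<bar> \<le> 1" by (simp add: markv_def)

lemma bl_markv [simp]: "bitlen (markv k) \<le> Vb n p ch"
  using bl_small[of "markv k"] markv_abs[of k] by linarith

lemma cbody_b: "1 < k \<Longrightarrow> k < n \<Longrightarrow>
   \<exists>t. big_step cbody (M2 j r k) t (M2 j r (k - 1)) \<and> t \<le> 200 * Vb n p ch"
proof -
  assume k: "1 < k" "k < n"
  have s1: "\<exists>t. big_step (Store cE (mkE cE)) (M2 j r k) t ((M2 j r k)(k := markv k)) \<and> t \<le> 100 * Vb n p ch"
    apply (rule mono_b)
     apply (rule store_b[where V="Vb n p ch"])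
    using k apply (simp_all add: V1 nat_add_distrib nat_mult_distrib M2_def M1_def mkf_def)
    using V1 by (auto simp: fun_eq_iff M2_def M1_def)
  have s2: "\<exists>t. big_step (Store (N 1) (Minus cE (N 1))) ((M2 j r k)(k := markv k)) t (M2 j r (k - 1)) \<and> t \<le> 99 * Vb n p ch"
    apply (rule mono_b)
     apply (rule store_b[where V="Vb n p ch"])
    using k apply (simp_all add: V1 nat_add_distrib nat_mult_distrib M2_def M1_def mkf_def)
    using V1 k by (auto simp: fun_eq_iff M2_def M1_def of_nat_diff)
  show ?thesis unfolding cbody_def using seq_b[OF s1 s2] V1 by fastforce
qed

lemma phase2_b: "\<exists>t s'. big_step phase2 (M1 n p ch n j r (mkf n)) t s' \<and> (\<forall>a<n. s' a = markv a) \<and>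
     t \<le> 100 * Vb n p ch + (n + 1) * (200 * Vb n p ch + 7 * Vb n p ch) + 100 * Vb n p ch + 100 * Vb n p ch + 3"
proof -
  have s0: "\<exists>t. big_step (Store (N 1) (Minus nN (N 1))) (M1 n p ch n j r (mkf n)) t (M2 j r (n - 1)) \<and> t \<le> 100 * Vb n p ch"
    apply (rule mono_b)
     apply (rule store_b[where V="Vb n p ch"])
    using n1 apply (simp_all add: V1 nat_add_distrib nat_mult_distrib M2_def M1_def)
    using V1 n1 by (auto simp: fun_eq_iff M2_def M1_def of_nat_diff)
  let ?P = "\<lambda>s. \<exists>k. k < n \<and> (1 \<le> k \<or> n = 1) \<and> s = M2 j r k"
  let ?f = "\<lambda>s. nat (s 1)"
  let ?Q = "\<lambda>s. \<exists>k. k < n \<and> k \<le> 1 \<and> (1 \<le> k \<or> n = 1) \<and> s = M2 j r k"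
  have w: "\<exists>t s'. big_step (While (Less (N 1) cE) cbody) (M2 j r (n - 1)) t s' \<and> ?Q s'
     \<and> t \<le> (?f (M2 j r (n - 1)) + 1) * (200 * Vb n p ch + (bsz (Less (N 1) cE) + 1) * Vb n p ch)"
  proof (rule while_b[where P="?P"])
    fix s assume "?P s"
    then obtain k where kk: "k < n" "1 \<le> k \<or> n = 1" "s = M2 j r k" by blast
    have bk: "bok (Vb n p ch) (Less (N 1) cE) s" using kk by (simp add: M2_def)
    show "bok (Vb n p ch) (Less (N 1) cE) s \<and>
       (if fst (bval (Less (N 1) cE) s) then (\<exists>s'. (\<exists>t. big_step cbody s t s' \<and> t \<le> 200 * Vb n p ch) \<and> ?P s' \<and> ?f s' < ?f s) else ?Q s)"
    proof (cases "1 < k")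
      case True
      have bv: "fst (bval (Less (N 1) cE) s)" using kk True by (simp add: M2_def)
      have "\<exists>t. big_step cbody s t (M2 j r (k - 1)) \<and> t \<le> 200 * Vb n p ch"
        using cbody_b[OF True kk(1)] kk by simp
      moreover have "?P (M2 j r (k - 1))" using True kk by (intro exI[of _ "k - 1"]) auto
      moreover have "?f (M2 j r (k - 1)) < ?f s" using kk True by (simp add: M2_def)
      ultimately have E: "\<exists>s'. (\<exists>t. big_step cbody s t s' \<and> t \<le> 200 * Vb n p ch) \<and> ?P s' \<and> ?f s' < ?f s" by blast
      show ?thesis by (simp only: bv if_True) (use bk E in blast)
    next
      case False
      have bv: "\<not> fst (bval (Less (N 1) cE) s)" using kk False by (simp add: M2_def)
      have "?Q s" using kk False by auto
      then show ?thesis using bk bv by simp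
    qed
  next
    show "1 \<le> Vb n p ch" by (rule V1)
  next
    show "?P (M2 j r (n - 1))" using n1 by (intro exI[of _ "n - 1"]) auto
  qed
  obtain t2 s2 where t2: "big_step (While (Less (N 1) cE) cbody) (M2 j r (n - 1)) t2 s2" "?Q s2"
     "t2 \<le> (?f (M2 j r (n - 1)) + 1) * (200 * Vb n p ch + (bsz (Less (N 1) cE) + 1) * Vb n p ch)"
    using w by blast
  have f0: "?f (M2 j r (n - 1)) \<le> n" by (simp add: M2_def)
  have t2': "t2 \<le> (n + 1) * (200 * Vb n p ch + 7 * Vb n p ch)"
  proof -
    have "(?f (M2 j r (n - 1)) + 1) * (200 * Vb n p ch + (bsz (Less (N 1) cE) + 1) * Vb n p ch)
       \<le> (n + 1) * (200 * Vb n p ch + (bsz (Less (N 1) cE) + 1) * Vb n p ch)"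
      using f0 by (intro mult_right_mono) auto
    with t2(3) have "t2 \<le> (n + 1) * (200 * Vb n p ch + (bsz (Less (N 1) cE) + 1) * Vb n p ch)"
      by (rule order_trans)
    then show ?thesis by simp
  qed
  obtain k where k: "k < n" "k \<le> 1" "1 \<le> k \<or> n = 1" "s2 = M2 j r k" using t2(2) by blast
  let ?s3 = "s2(1 := mkf n 1)"
  have s3: "\<exists>t. big_step (Store (N 1) (mkE (N 1))) s2 t ?s3 \<and> t \<le> 100 * Vb n p ch"
    apply (rule mono_b)
     apply (rule store_b[where V="Vb n p ch"])
    using k n1 apply (simp_all add: V1 nat_add_distrib nat_mult_distrib M2_def M1_def mkf_def)
    using V1 k by (auto simp: fun_eq_iff M2_def M1_def)
  let ?s4 = "?s3(0 := markv 0)"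
  have s4: "\<exists>t. big_step (Store (N 0) (mkE (N 0))) ?s3 t ?s4 \<and> t \<le> 100 * Vb n p ch"
    apply (rule mono_b)
     apply (rule store_b[where V="Vb n p ch"])
    using k n1 apply (simp_all add: V1 nat_add_distrib nat_mult_distrib M2_def M1_def mkf_def)
    using V1 k by (auto simp: fun_eq_iff M2_def M1_def)
  have fin: "\<forall>a<n. ?s4 a = markv a" using k by (auto simp: M2_def mkf_def)
  obtain t0 where t0: "big_step (Store (N 1) (Minus nN (N 1))) (M1 n p ch n j r (mkf n)) t0 (M2 j r (n - 1))" "t0 \<le> 100 * Vb n p ch"
    using s0 by blast
  obtain t3 where t3: "big_step (Store (N 1) (mkE (N 1))) s2 t3 ?s3" "t3 \<le> 100 * Vb n p ch" using s3 by blast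
  obtain t4 where t4: "big_step (Store (N 0) (mkE (N 0))) ?s3 t4 ?s4" "t4 \<le> 100 * Vb n p ch" using s4 by blast
  have "big_step phase2 (M1 n p ch n j r (mkf n)) (t0 + (t2 + (t3 + t4 + 1) + 1) + 1) ?s4"
    unfolding phase2_def by (rule big_step.Seq[OF t0(1) big_step.Seq[OF t2(1) big_step.Seq[OF t3(1) t4(1)]]])
  then show ?thesis using fin t0(2) t2' t3(2) t4(2) by (intro exI[of _ "t0 + (t2 + (t3 + t4 + 1) + 1) + 1"] exI[of _ ?s4]) auto
qed

lemma ltq_iff: "ltq ch j i \<longleftrightarrow> ch j < ch i \<or> (ch j = ch i \<and> j < i)"
proof -
  have lt: "ch j < ch i \<longleftrightarrow> numv ch j * denv ch i < numv ch i * denv ch j"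
    by (simp add: rat_less_code split: prod.splits) (simp add: mult.commute)
  have le1: "ch j \<le> ch i \<longleftrightarrow> numv ch j * denv ch i \<le> numv ch i * denv ch j"
    by (simp add: rat_less_eq_code split: prod.splits) (simp add: mult.commute)
  have le2: "ch i \<le> ch j \<longleftrightarrow> numv ch i * denv ch j \<le> numv ch j * denv ch i"
    by (simp add: rat_less_eq_code split: prod.splits) (simp add: mult.commute)
  have eq: "ch j = ch i \<longleftrightarrow> numv ch j * denv ch i = numv ch i * denv ch j"
    using le1 le2 by auto
  show ?thesis unfolding ltq_def lt eq ..
qed

lemma ltq_irrefl: "\<not> ltq ch i i" by (simp add: ltq_iff)
lemma ltq_trans: "ltq ch a b \<Longrightarrow> ltq ch b c \<Longrightarrow> ltq ch a c" by (auto simp: ltq_iff)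
lemma ltq_total: "a \<noteq> b \<Longrightarrow> ltq ch a b \<or> ltq ch b a" by (auto simp: ltq_iff)

lemma rk_mono: "ltq ch i j \<Longrightarrow> i < n \<Longrightarrow> rk i < rk j"
  unfolding rk_def
proof (rule psubset_card_mono)
  assume "ltq ch i j" "i < n"
  then show "{x. x < n \<and> ltq ch x i} \<subset> {x. x < n \<and> ltq ch x j}"
    using ltq_trans ltq_irrefl by blast
qed auto

lemma rk_lt: "i < n \<Longrightarrow> rk i < n"
proof -
  assume i: "i < n"
  have "rk i \<le> card ({..<n} - {i})" unfolding rk_def by (rule card_mono) (auto simp: ltq_irrefl)
  then show ?thesis using i by simp
qed

lemma rk_inj: "inj_on rk {..<n}"
proof (rule inj_onI)
  fix a b assume ab: "a \<in> {..<n}" "b \<in> {..<n}" "rk a = rk b"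
  show "a = b"
  proof (rule ccontr)
    assume "a \<noteq> b"
    then have "ltq ch a b \<or> ltq ch b a" by (rule ltq_total)
    then show False using rk_mono ab by fastforce
  qed
qed

lemma rk_img: "rk ` {..<n} = {..<n}"
proof (rule card_subset_eq)
  show "rk ` {..<n} \<subseteq> {..<n}" using rk_lt by auto
  show "card (rk ` {..<n}) = card {..<n}" using rk_inj by (simp add: card_image)
qed simp

lemma card_sel: "card {i. i < n \<and> rk i < p} = p"
proof -
  have "card {i. i < n \<and> rk i < p} = card (rk ` {i. i < n \<and> rk i < p})"
    using rk_inj by (intro card_image[symmetric]) (auto intro: inj_on_subset)
  also have "rk ` {i. i < n \<and> rk i < p} = {..<p}"
  proof -
    have "rk ` {i. i < n \<and> rk i < p} = {x \<in> rk ` {..<n}. x < p}" by auto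
    also have "\<dots> = {..<p}" using rk_img pn by auto
    finally show ?thesis .
  qed
  finally show ?thesis by simp
qed

definition "xsel = (\<lambda>i. if i < n then real_of_int (markv i) else 0)"

lemma xsel_feas: "xsel \<in> feas n p"
proof -
  have "(\<Sum>i<n. xsel i) = (\<Sum>i<n. if rk i < p then 1 else 0)"
    by (rule sum.cong) (auto simp: xsel_def markv_def)
  also have "\<dots> = real (card ({..<n} \<inter> {i. rk i < p}))" by (simp add: sum.If_cases)
  also have "{..<n} \<inter> {i. rk i < p} = {i. i < n \<and> rk i < p}" by auto
  finally have "(\<Sum>i<n. xsel i) = real p" using card_sel by simp
  then show ?thesis unfolding feas_def by (auto simp: xsel_def markv_def)
qed

lemma xsel_sel: "\<forall>i<n. \<forall>j<n. xsel i = 1 \<longrightarrow> xsel j = 0 \<longrightarrow> real_of_rat (ch i) \<le> real_of_rat (ch j)"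
proof (intro allI impI)
  fix i j assume ij: "i < n" "j < n" "xsel i = 1" "xsel j = 0"
  then have r: "rk i < p" "\<not> rk j < p" by (auto simp: xsel_def markv_def split: if_splits)
  have "\<not> ch j < ch i"
  proof
    assume "ch j < ch i"
    then have "ltq ch j i" by (simp add: ltq_iff)
    then have "rk j < rk i" using ij by (intro rk_mono)
    then show False using r by simp
  qed
  then show "real_of_rat (ch i) \<le> real_of_rat (ch j)" by (simp add: of_rat_less_eq not_less)
qed

lemma all_b: "\<exists>t s'. big_step theprog (enc n p ch) t s' \<and> decode_out n s' = xsel \<and>
   t \<le> 200000 * (input_size n p ch + 1) ^ 3"
proof -
  obtain t1 s1 j r where p1: "big_step phase1 (enc n p ch) t1 s1" "s1 = M1 n p ch n j r (mkf n)"
    "t1 \<le> 100 * Vb n p ch + (n + 1) * (Ko + 17 * Vb n p ch) + 1"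
    using phase1_b by blast
  obtain t2 s2 where p2: "big_step phase2 (M1 n p ch n j r (mkf n)) t2 s2" "\<forall>a<n. s2 a = markv a"
    "t2 \<le> 100 * Vb n p ch + (n + 1) * (200 * Vb n p ch + 7 * Vb n p ch) + 100 * Vb n p ch + 100 * Vb n p ch + 3"
    using phase2_b by blast
  have bs: "big_step theprog (enc n p ch) (t1 + t2 + 1) s2"
    unfolding theprog_def using big_step.Seq[OF p1(1) p2(1)[folded p1(2)]] .
  have dec: "decode_out n s2 = xsel" using p2(2) by (auto simp: decode_out_def xsel_def fun_eq_iff)
  define V where "V = Vb n p ch"
  define X where "X = input_size n p ch + 1"
  define m where "m = n + 1"
  have mX: "m \<le> X" using size_ge unfolding m_def X_def by simp
  have VX: "V \<le> 26 * X" using size_ge unfolding V_def Vb_def X_def by simp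
  have V1': "1 \<le> V" using V1 unfolding V_def .
  have tb: "t1 + t2 + 1 \<le> 1020 * (m * m * V) + 2224 * (m * V) + 400 * V + 5"
    using p1(3) p2(3) unfolding V_def[symmetric] m_def by (simp add: algebra_simps)
  have a1: "m * m * V \<le> X * X * V" using mX by (intro mult_mono) auto
  have a2: "m * V \<le> X * X * V"
  proof -
    have "m \<le> X * X" using mX by (metis le_square order_trans)
    then show ?thesis by (intro mult_right_mono) auto
  qed
  have a3: "V \<le> X * X * V"
  proof -
    have "1 \<le> X * X" using mX unfolding m_def by (simp add: Suc_le_eq)
    then show ?thesis by (metis mult_1 mult_right_mono zero_le)
  qed
  have "t1 + t2 + 1 \<le> 4000 * (X * X * V)" using tb a1 a2 a3 V1' by linarith
  also have "\<dots> \<le> 4000 * (X * X * (26 * X))" using VX by (intro mult_left_mono) auto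
  also have "\<dots> \<le> 200000 * X ^ 3" by (simp add: power3_eq_cube)
  finally show ?thesis using bs dec unfolding X_def by blast
qed

end

theorem corollary1:
  "\<exists>(prog :: com) (C :: nat) (k :: nat).
     \<forall>(n :: nat) (p :: nat) (ch :: nat \<Rightarrow> rat).
       n \<ge> 1 \<longrightarrow> p \<le> n \<longrightarrow> (\<forall>i<n. ch i \<ge> 0) \<longrightarrow>
       (\<exists>t s'. big_step prog (enc n p ch) t s' \<and>
          t \<le> C * (input_size n p ch + 1) ^ k \<and>
          decode_out n s' \<in> feas n p \<and>
          (\<forall>y\<in>feas n p.
             compromise_val n p (\<lambda>i. real_of_rat (ch i)) (decode_out n s')
               \<le> compromise_val n p (\<lambda>i. real_of_rat (ch i)) y))"
proof (rule exI[of _ theprog], rule exI[of _ 200000], rule exI[of _ 3], intro allI impI)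
  fix n p :: nat and ch :: "nat \<Rightarrow> rat"
  assume n1: "n \<ge> 1" and pn: "p \<le> n" and nonneg: "\<forall>i<n. ch i \<ge> 0"
  obtain t s' where ts: "big_step theprog (enc n p ch) t s'" "decode_out n s' = xsel n p ch"
    "t \<le> 200000 * (input_size n p ch + 1) ^ 3"
    using all_b[OF n1 pn] by blast
  have F: "decode_out n s' \<in> feas n p" using xsel_feas[OF n1 pn] ts(2) by simp
  have h: "\<forall>i<n. real_of_rat (ch i) \<ge> 0" using nonneg by simp
  have opt: "\<forall>y\<in>feas n p. compromise_val n p (\<lambda>i. real_of_rat (ch i)) (decode_out n s')
               \<le> compromise_val n p (\<lambda>i. real_of_rat (ch i)) y"
    using main_math[OF F _ h pn] xsel_sel[OF n1 pn] ts(2) by simp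
  show "\<exists>t s'. big_step theprog (enc n p ch) t s' \<and>
          t \<le> 200000 * (input_size n p ch + 1) ^ 3 \<and>
          decode_out n s' \<in> feas n p \<and>
          (\<forall>y\<in>feas n p.
             compromise_val n p (\<lambda>i. real_of_rat (ch i)) (decode_out n s')
               \<le> compromise_val n p (\<lambda>i. real_of_rat (ch i)) y)"
    using ts F opt by blast
qed

end
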